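(* Let $\{X,Y\}$ be a partition of $\mathbb{R}$ into two infinite subsets, let $f$ be a two-point selection on $X$ and $g$ a two-point selection on $Y$. Define $h=f\oplus g$ on $[\mathbb{R}]^2$ by $h(\{x,y\})=x$ if $x\in X$ and $y\in Y$; $h(\{x,y\})=f(\{x,y\})$ if $x,y\in X$; $h(\{x,y\})=g(\{x,y\})$ if $x,y\in Y$. Then $$\mathcal{B}_{f\oplus g}(\mathbb{R}) = \mathcal{B}_f(X)\oplus\mathcal{B}_g(Y),$$ where for $\sigma$-algebras $\mathcal{A}$ on $X$ and $\mathcal{B}$ on $Y$, $\mathcal{A}\oplus\mathcal{B}=\{A\cup B: A\in\mathcal{A},\ B\in\mathcal{B}\}$.
   Context: For a set $Z$, $[Z]^2$ is the set of two-element subsets of $Z$; a two-point selection on $Z$ is a map $f:[Z]^2\to Z$ with $f(F)\in F$. Write $r<_f s$ if $f(\{r,s\})=r$, and $(\leftarrow,r)_f=\{x\in Z: x<_f r\}$, $(r,\rightarrow)_f=\{x\in Z: r<_f x\}$. The topology $\tau_f$ on $Z$ is generated (as a subbase) by all these sets, and $\mathcal{B}_f(Z)$ is the $\sigma$-algebra on $Z$ generated by $\tau_f$. *)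

theory Defs
  imports "HOL-Analysis.Analysis" "HOL-Probability.Probability"
begin

definition two_subsets :: "'a set \<Rightarrow> 'a set set" where
  "two_subsets Z = {F. \<exists>x y. x \<in> Z \<and> y \<in> Z \<and> x \<noteq> y \<and> F = {x, y}}"

definition two_point_selection :: "'a set \<Rightarrow> ('a set \<Rightarrow> 'a) \<Rightarrow> bool" where
  "two_point_selection Z f \<longleftrightarrow> (\<forall>F \<in> two_subsets Z. f F \<in> F)"

definition sel_less :: "'a set \<Rightarrow> ('a set \<Rightarrow> 'a) \<Rightarrow> 'a \<Rightarrow> 'a \<Rightarrow> bool" where
  "sel_less Z f r s \<longleftrightarrow> r \<in> Z \<and> s \<in> Z \<and> r \<noteq> s \<and> f {r, s} = r"

definition sel_left_ray :: "'a set \<Rightarrow> ('a set \<Rightarrow> 'a) \<Rightarrow> 'a \<Rightarrow> 'a set" where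
  "sel_left_ray Z f r = {x \<in> Z. sel_less Z f x r}"

definition sel_right_ray :: "'a set \<Rightarrow> ('a set \<Rightarrow> 'a) \<Rightarrow> 'a \<Rightarrow> 'a set" where
  "sel_right_ray Z f r = {x \<in> Z. sel_less Z f r x}"

text \<open>The topology tau_f on Z, generated by the open rays as a subbase
  (Z itself included, as the empty intersection of subbase elements).\<close>
definition sel_topology :: "'a set \<Rightarrow> ('a set \<Rightarrow> 'a) \<Rightarrow> 'a topology" where
  "sel_topology Z f = topology_generated_by
     (insert Z ((sel_left_ray Z f ` Z) \<union> (sel_right_ray Z f ` Z)))"

definition sel_borel :: "'a set \<Rightarrow> ('a set \<Rightarrow> 'a) \<Rightarrow> 'a set set" where
  "sel_borel Z f = sigma_sets Z {U. openin (sel_topology Z f) U}"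

definition sel_sum :: "'a set \<Rightarrow> 'a set \<Rightarrow> ('a set \<Rightarrow> 'a) \<Rightarrow> ('a set \<Rightarrow> 'a) \<Rightarrow> ('a set \<Rightarrow> 'a)" where
  "sel_sum X Y f g F =
     (if F \<subseteq> X then f F else if F \<subseteq> Y then g F else (THE x. x \<in> F \<and> x \<in> X))"

definition sigma_sum :: "'a set set \<Rightarrow> 'a set set \<Rightarrow> 'a set set" where
  "sigma_sum \<A> \<B> = {A \<union> B | A B. A \<in> \<A> \<and> B \<in> \<B>}"

end

theory Submission
  imports Defs
begin

lemma gen_restrict:
  assumes "generate_topology_on S U" "\<And>s. s \<in> S \<Longrightarrow> generate_topology_on S' (s \<inter> X)"
  shows "generate_topology_on S' (U \<inter> X)"
  using assms(1)
proof (induction rule: generate_topology_on.induct)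
  case Empty then show ?case by (simp add: generate_topology_on.Empty)
next
  case (Int a b)
  have "a \<inter> b \<inter> X = (a \<inter> X) \<inter> (b \<inter> X)" by blast
  then show ?case using Int by (simp add: generate_topology_on.Int)
next
  case (UN K)
  have "\<Union>K \<inter> X = \<Union>((\<lambda>k. k \<inter> X) ` K)" by blast
  moreover have "generate_topology_on S' (\<Union>((\<lambda>k. k \<inter> X) ` K))"
    by (rule generate_topology_on.UN) (use UN in auto)
  ultimately show ?case by simp
next
  case (Basis s) then show ?case using assms(2) by blast
qed

lemma gen_extend:
  assumes "generate_topology_on S' V" "\<And>s'. s' \<in> S' \<Longrightarrow> \<exists>s. generate_topology_on S s \<and> s' = s \<inter> X"
  shows "\<exists>W. generate_topology_on S W \<and> V = W \<inter> X"
  using assms(1)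
proof (induction rule: generate_topology_on.induct)
  case Empty then show ?case by (auto intro: generate_topology_on.Empty)
next
  case (Int a b)
  then obtain Wa Wb where "generate_topology_on S Wa" "a = Wa \<inter> X" "generate_topology_on S Wb" "b = Wb \<inter> X" by blast
  then show ?case by (intro exI[of _ "Wa \<inter> Wb"]) (auto intro: generate_topology_on.Int)
next
  case (UN K)
  then have "\<forall>k\<in>K. \<exists>W. generate_topology_on S W \<and> k = W \<inter> X" by blast
  then obtain w where w: "\<And>k. k \<in> K \<Longrightarrow> generate_topology_on S (w k) \<and> k = w k \<inter> X" by metis
  have "\<Union>K = \<Union>(w ` K) \<inter> X" using w by blast
  moreover have "generate_topology_on S (\<Union>(w ` K))"
    by (rule generate_topology_on.UN) (use w in auto)
  ultimately show ?case by blast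
next
  case (Basis s) then show ?case using assms(2) by blast
qed

theorem theorem3p4:
  fixes X Y :: "real set" and f g :: "real set \<Rightarrow> real"
  assumes "X \<union> Y = UNIV" and "X \<inter> Y = {}"
    and "infinite X" and "infinite Y"
    and "two_point_selection X f" and "two_point_selection Y g"
  shows "sel_borel UNIV (sel_sum X Y f g) = sigma_sum (sel_borel X f) (sel_borel Y g)"
proof -
  define h where "h = sel_sum X Y f g"
  have hXY: "h {x, y} = x" if "x \<in> X" "y \<in> Y" for x y
  proof -
    have "y \<notin> X" "x \<notin> Y" using that assms(2) by auto
    moreover have "(THE z. z \<in> {x,y} \<and> z \<in> X) = x"
      by (rule the_equality) (use that assms(2) in auto)
    ultimately show ?thesis unfolding h_def sel_sum_def using that by simp
  qed
  have hXX: "h {x, y} = f {x,y}" if "x \<in> X" "y \<in> X" for x y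
    using that unfolding h_def sel_sum_def by simp
  have hYY: "h {x, y} = g {x,y}" if "x \<in> Y" "y \<in> Y" for x y
    using that assms(2) unfolding h_def sel_sum_def by auto
  have key: "sel_less UNIV h a b \<longleftrightarrow> (a \<in> X \<and> b \<in> X \<and> sel_less X f a b)
     \<or> (a \<in> Y \<and> b \<in> Y \<and> sel_less Y g a b) \<or> (a \<in> X \<and> b \<in> Y)" for a b
  proof -
    have "a \<in> X \<or> a \<in> Y" "b \<in> X \<or> b \<in> Y" using assms(1) by auto
    moreover have "a \<in> X \<Longrightarrow> b \<in> Y \<Longrightarrow> a \<noteq> b" "a \<in> Y \<Longrightarrow> b \<in> X \<Longrightarrow> a \<noteq> b"
      using assms(2) by auto
    moreover have "a \<in> Y \<Longrightarrow> b \<in> X \<Longrightarrow> h {a,b} = b"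
      using hXY[of b a] by (simp add: insert_commute)
    ultimately show ?thesis unfolding sel_less_def
      using hXY[of a b] hXX[of a b] hYY[of a b] assms(2) by auto
  qed
  define Sh where "Sh = insert UNIV (sel_left_ray UNIV h ` UNIV \<union> sel_right_ray UNIV h ` UNIV)"
  define Sf where "Sf = insert X (sel_left_ray X f ` X \<union> sel_right_ray X f ` X)"
  define Sg where "Sg = insert Y (sel_left_ray Y g ` Y \<union> sel_right_ray Y g ` Y)"
  have opn: "openin (sel_topology Z k) U \<longleftrightarrow> generate_topology_on (insert Z (sel_left_ray Z k ` Z \<union> sel_right_ray Z k ` Z)) U" for Z k U
    unfolding sel_topology_def by (simp add: openin_topology_generated_by_iff)
  have Bh: "sel_borel UNIV h = sigma_sets UNIV {U. generate_topology_on Sh U}"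
    unfolding sel_borel_def Sh_def opn ..
  have Bf: "sel_borel X f = sigma_sets X {U. generate_topology_on Sf U}"
    unfolding sel_borel_def Sf_def opn ..
  have Bg: "sel_borel Y g = sigma_sets Y {U. generate_topology_on Sg U}"
    unfolding sel_borel_def Sg_def opn ..
  have lX: "sel_left_ray UNIV h r \<inter> X = (if r \<in> X then sel_left_ray X f r else X)" for r
    using assms(1,2) unfolding sel_left_ray_def key by (auto simp: sel_less_def)
  have rX: "sel_right_ray UNIV h r \<inter> X = (if r \<in> X then sel_right_ray X f r else {})" for r
    using assms(1,2) unfolding sel_right_ray_def key by (auto simp: sel_less_def)
  have lY: "sel_left_ray UNIV h r \<inter> Y = (if r \<in> Y then sel_left_ray Y g r else {})" for r
    using assms(1,2) unfolding sel_left_ray_def key by (auto simp: sel_less_def)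
  have rY: "sel_right_ray UNIV h r \<inter> Y = (if r \<in> Y then sel_right_ray Y g r else Y)" for r
    using assms(1,2) unfolding sel_right_ray_def key by (auto simp: sel_less_def)
  have genf: "generate_topology_on Sf (s \<inter> X)" if "s \<in> Sh" for s
    using that unfolding Sh_def
    apply (auto simp: lX rX generate_topology_on.Empty)
    by (auto intro!: generate_topology_on.Basis simp: Sf_def)
  have geng: "generate_topology_on Sg (s \<inter> Y)" if "s \<in> Sh" for s
    using that unfolding Sh_def
    apply (auto simp: lY rY generate_topology_on.Empty)
    by (auto intro!: generate_topology_on.Basis simp: Sg_def)
  have extf: "\<exists>s. generate_topology_on Sh s \<and> s' = s \<inter> X" if "s' \<in> Sf" for s'
  proof -
    have "\<exists>s\<in>Sh. s' = s \<inter> X"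
    proof -
      from that consider "s' = X" | r where "r \<in> X" "s' = sel_left_ray X f r"
        | r where "r \<in> X" "s' = sel_right_ray X f r" unfolding Sf_def by blast
      then show ?thesis
      proof cases
      case 1 then show ?thesis by (intro bexI[of _ UNIV]) (auto simp: Sh_def)
    next
      case (2 r)
      then show ?thesis using lX[of r] by (intro bexI[of _ "sel_left_ray UNIV h r"]) (auto simp: Sh_def)
    next
      case (3 r)
      then show ?thesis using rX[of r] by (intro bexI[of _ "sel_right_ray UNIV h r"]) (auto simp: Sh_def)
    qed
    qed
    then show ?thesis by (auto intro: generate_topology_on.Basis)
  qed
  have extg: "\<exists>s. generate_topology_on Sh s \<and> s' = s \<inter> Y" if "s' \<in> Sg" for s'
  proof -
    have "\<exists>s\<in>Sh. s' = s \<inter> Y"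
    proof -
      from that consider "s' = Y" | r where "r \<in> Y" "s' = sel_left_ray Y g r"
        | r where "r \<in> Y" "s' = sel_right_ray Y g r" unfolding Sg_def by blast
      then show ?thesis
      proof cases
      case 1 then show ?thesis by (intro bexI[of _ UNIV]) (auto simp: Sh_def)
    next
      case (2 r)
      then show ?thesis using lY[of r] by (intro bexI[of _ "sel_left_ray UNIV h r"]) (auto simp: Sh_def)
    next
      case (3 r)
      then show ?thesis using rY[of r] by (intro bexI[of _ "sel_right_ray UNIV h r"]) (auto simp: Sh_def)
    qed
    qed
    then show ?thesis by (auto intro: generate_topology_on.Basis)
  qed
  interpret sa: sigma_algebra UNIV "sel_borel UNIV h"
    unfolding Bh by (rule sigma_algebra_sigma_sets) auto
  have openB: "U \<in> sel_borel UNIV h" if "generate_topology_on Sh U" for U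
    unfolding Bh using that by (auto intro: sigma_sets.Basic)
  have XB: "X \<in> sel_borel UNIV h"
  proof (cases "\<exists>m\<in>X. \<forall>x\<in>X. \<not> sel_less X f m x")
    case True
    then obtain m where m: "m \<in> X" "\<forall>x\<in>X. \<not> sel_less X f m x" by blast
    have "sel_right_ray UNIV h m = Y"
      using m assms(1,2) unfolding sel_right_ray_def key by auto
    then have "Y \<in> sel_borel UNIV h"
      by (metis openB Sh_def generate_topology_on.Basis insertCI UnI2 UNIV_I image_eqI)
    moreover have "X = UNIV - Y" using assms(1,2) by auto
    ultimately show ?thesis by auto
  next
    case False
    have "X = \<Union>(sel_left_ray UNIV h ` X)"
      using False assms(2) unfolding sel_left_ray_def key by auto
    moreover have "generate_topology_on Sh (\<Union>(sel_left_ray UNIV h ` X))"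
      by (rule generate_topology_on.UN) (auto simp: Sh_def intro: generate_topology_on.Basis)
    ultimately show ?thesis using openB by metis
  qed
  have YB: "Y \<in> sel_borel UNIV h"
  proof -
    have "Y = UNIV - X" using assms(1,2) by auto
    then show ?thesis using XB by auto
  qed
  have fwd: "A \<inter> X \<in> sel_borel X f \<and> A \<inter> Y \<in> sel_borel Y g" if "A \<in> sel_borel UNIV h" for A
    using that unfolding Bh
  proof (induction rule: sigma_sets.induct)
    case (Basic a)
    then show ?case unfolding Bf Bg
      using gen_restrict[OF _ genf] gen_restrict[OF _ geng] by (auto intro: sigma_sets.Basic)
  next
    case Empty then show ?case unfolding Bf Bg by (auto intro: sigma_sets.Empty)
  next
    case (Compl a)
    have "(UNIV - a) \<inter> X = X - (a \<inter> X)" "(UNIV - a) \<inter> Y = Y - (a \<inter> Y)" by auto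
    then show ?case using Compl unfolding Bf Bg by (auto intro: sigma_sets.Compl)
  next
    case (Union a)
    have "(\<Union>i. a i) \<inter> X = (\<Union>i. a i \<inter> X)" "(\<Union>i. a i) \<inter> Y = (\<Union>i. a i \<inter> Y)" by auto
    moreover have "(\<Union>i. a i \<inter> X) \<in> sigma_sets X {U. generate_topology_on Sf U}"
      by (rule sigma_sets.Union) (use Union in \<open>auto simp: Bf Bg\<close>)
    moreover have "(\<Union>i. a i \<inter> Y) \<in> sigma_sets Y {U. generate_topology_on Sg U}"
      by (rule sigma_sets.Union) (use Union in \<open>auto simp: Bf Bg\<close>)
    ultimately show ?case unfolding Bf Bg by simp
  qed
  have bwdf: "A \<in> sel_borel UNIV h" if "A \<in> sel_borel X f" for A
    using that unfolding Bf
  proof (induction rule: sigma_sets.induct)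
    case (Basic a)
    then obtain W where "generate_topology_on Sh W" "a = W \<inter> X"
      using gen_extend[OF _ extf] by blast
    then show ?case using openB XB by auto
  next
    case Empty then show ?case by auto
  next
    case (Compl a)
    have "X - a = X \<inter> (UNIV - a)" by auto
    then show ?case using Compl XB by auto
  next
    case (Union a)
    then show ?case by auto
  qed
  have bwdg: "A \<in> sel_borel UNIV h" if "A \<in> sel_borel Y g" for A
    using that unfolding Bg
  proof (induction rule: sigma_sets.induct)
    case (Basic a)
    then obtain W where "generate_topology_on Sh W" "a = W \<inter> Y"
      using gen_extend[OF _ extg] by blast
    then show ?case using openB YB by auto
  next
    case Empty then show ?case by auto
  next
    case (Compl a)
    have "Y - a = Y \<inter> (UNIV - a)" by auto
    then show ?case using Compl YB by auto
  next
    case (Union a)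
    then show ?case by auto
  qed
  show ?thesis
    unfolding h_def[symmetric] sigma_sum_def
  proof (intro equalityI subsetI)
    fix A assume A: "A \<in> sel_borel UNIV h"
    have "A = (A \<inter> X) \<union> (A \<inter> Y)" using assms(1) by auto
    then show "A \<in> {A \<union> B |A B. A \<in> sel_borel X f \<and> B \<in> sel_borel Y g}"
      using fwd[OF A] by blast
  next
    fix A assume "A \<in> {A \<union> B |A B. A \<in> sel_borel X f \<and> B \<in> sel_borel Y g}"
    then show "A \<in> sel_borel UNIV h" using bwdf bwdg by auto
  qed
qed

end
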